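(* Let $M=G/K$ be as in the standing setup, of rank $r$, and let $1\le s\le r$. Let $\mu=\sum_{j=1}^{s}k_j\xi_j$ with $k_j\in\mathbb Z_{\ge0}$ and $k_s>0$. Then \[ \mathbf c(\mu+\rho)\le\mathbf c(\xi_s+\rho). \]
   Context: Standing setup. $G$ is a connected compact semisimple Lie group, $\theta$ an involutive automorphism, $K$ a closed subgroup with $(G^\theta)_0\subseteq K\subseteq G^\theta$, $M=G/K$ simply connected. $\mathfrak g=\mathfrak k\oplus\mathfrak s$ is the eigenspace decomposition of $\theta$, $\mathfrak a\subseteq\mathfrak s$ maximal abelian with $r=\dim\mathfrak a$, and a $K$-invariant inner product on $\mathfrak s$ induces a real inner product $\langle\cdot,\cdot\rangle$ on $i\mathfrak a^*$. $\Sigma\subset i\mathfrak a^*$ is the set of restricted roots, $m_\alpha$ their multiplicities ($m_\beta=0$ if $\beta\notin\Sigma$), $\Sigma^+$ a positive system, $\Sigma_0^+=\{\alpha\in\Sigma^+:2\alpha\notin\Sigma\}$ with simple roots $\alpha_1,\dots,\alpha_r$, $\rho=\tfrac12\sum_{\alpha\in\Sigma^+}m_\alpha\alpha$, and $\lambda_\alpha=\langle\lambda,\alpha\rangle/\langle\alpha,\alpha\rangle$. The class 1 fundamental weights $\xi_1,\dots,\xi_r\in i\mathfrak a^*$ are defined by $\langle\xi_i,\alpha_j\rangle/\langle\alpha_j,\alpha_j\rangle=\delta_{ij}$. The Harish-Chandra $c$-function is $\mathbf c(\lambda)={}'c(\lambda)/{}'c(\rho)$ with ${}'c(\lambda)=\prod_{\alpha\in\Sigma_0^+}\frac{2^{-2\lambda_\alpha}\Gamma(2\lambda_\alpha)}{\Gamma(\lambda_\alpha+m_{\alpha/2}/4+1/2)\Gamma(\lambda_\alpha+m_{\alpha/2}/4+m_\alpha/2)}$.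 *)

theory Defs
  imports "HOL-Analysis.Analysis"
begin

text \<open>Abstract model of the restricted root system of a compact symmetric space.
  The real inner product space i a^* is modelled by a Euclidean space 'a
  (so r = DIM('a)).\<close>

definition coroot_coeff :: "'a::real_inner \<Rightarrow> 'a \<Rightarrow> real" where
  "coroot_coeff lam a = inner lam a / inner a a"

definition root_reflect :: "'a::real_inner \<Rightarrow> 'a \<Rightarrow> 'a" where
  "root_reflect a b = b - (2 * coroot_coeff b a) *\<^sub>R a"

definition root_system_mult :: "'a::euclidean_space set \<Rightarrow> ('a \<Rightarrow> nat) \<Rightarrow> bool" where
  "root_system_mult S m \<longleftrightarrow>
     finite S \<and> 0 \<notin> S \<and> span S = UNIV \<and>
     (\<forall>a\<in>S. \<forall>b\<in>S. root_reflect a b \<in> S) \<and>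
     (\<forall>a\<in>S. \<forall>b\<in>S. 2 * coroot_coeff b a \<in> \<int>) \<and>
     (\<forall>a\<in>S. m a > 0) \<and> (\<forall>b. b \<notin> S \<longrightarrow> m b = 0) \<and>
     (\<forall>a\<in>S. \<forall>b\<in>S. m (root_reflect a b) = m b)"

definition positive_system :: "'a::euclidean_space set \<Rightarrow> 'a set \<Rightarrow> bool" where
  "positive_system S P \<longleftrightarrow>
     (\<exists>h. (\<forall>a\<in>S. inner a h \<noteq> 0) \<and> P = {a\<in>S. inner a h > 0})"

definition Sigma0_pos :: "'a::real_vector set \<Rightarrow> 'a set \<Rightarrow> 'a set" where
  "Sigma0_pos S P = {a\<in>P. (2::real) *\<^sub>R a \<notin> S}"

definition simple_roots0 :: "'a::real_vector set \<Rightarrow> 'a set \<Rightarrow> 'a set" where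
  "simple_roots0 S P = {a\<in>Sigma0_pos S P.
      \<not> (\<exists>b\<in>Sigma0_pos S P. \<exists>c\<in>Sigma0_pos S P. a = b + c)}"

definition rho_vec :: "('a::real_vector \<Rightarrow> nat) \<Rightarrow> 'a set \<Rightarrow> 'a" where
  "rho_vec m P = (1/2) *\<^sub>R (\<Sum>a\<in>P. real (m a) *\<^sub>R a)"

definition c_prime :: "'a::real_inner set \<Rightarrow> ('a \<Rightarrow> nat) \<Rightarrow> 'a set \<Rightarrow> 'a \<Rightarrow> real" where
  "c_prime S m P lam = (\<Prod>a\<in>Sigma0_pos S P.
     (let x = coroot_coeff lam a;
          mh = real (m ((1/2::real) *\<^sub>R a)) / 4
      in 2 powr (- 2 * x) * Gamma (2 * x) /
         (Gamma (x + mh + 1/2) * Gamma (x + mh + real (m a) / 2))))"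

definition c_fun :: "'a::real_inner set \<Rightarrow> ('a \<Rightarrow> nat) \<Rightarrow> 'a set \<Rightarrow> 'a \<Rightarrow> real" where
  "c_fun S m P lam = c_prime S m P lam / c_prime S m P (rho_vec m P)"

end

theory Submission
  imports Defs
begin

lemma Gamma_ratio_antimono:
  fixes x y q :: real assumes "0 < x" "x \<le> y" "0 \<le> q"
  shows "Gamma y / Gamma (y+q) \<le> Gamma x / Gamma (x+q)"
proof -
  have "ln_Gamma y - ln_Gamma (y+q) \<le> ln_Gamma x - ln_Gamma (x+q)"
  proof (rule DERIV_nonpos_imp_nonincreasing[where f = "\<lambda>t. ln_Gamma t - ln_Gamma (t+q)", OF assms(2)])
    fix t assume "x \<le> t" "t \<le> y"
    hence t: "t > 0" using assms by linarith
    show "\<exists>d. DERIV (\<lambda>t. ln_Gamma t - ln_Gamma (t+q)) t :> d \<and> d \<le> 0"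
      using t assms
      by (intro exI[of _ "Digamma t - Digamma (t+q)"] conjI)
         (auto intro!: derivative_eq_intros Digamma_real_mono)
  qed
  hence "exp (ln_Gamma y - ln_Gamma (y+q)) \<le> exp (ln_Gamma x - ln_Gamma (x+q))" by simp
  thus ?thesis using assms by (simp add: exp_diff Gamma_real_pos_exp)
qed

lemma Gamma_dup_real:
  fixes x :: real assumes "x > 0"
  shows "Gamma x * Gamma (x+1/2) = exp ((1-2*x) * ln 2) * sqrt pi * Gamma (2*x)"
proof -
  have nz: "complex_of_real x \<notin> \<int>\<^sub>\<le>\<^sub>0" "complex_of_real x + 1/2 \<notin> \<int>\<^sub>\<le>\<^sub>0"
    using assms by (auto elim!: nonpos_Ints_cases simp: complex_eq_iff)
  have "complex_of_real (Gamma x * Gamma (x+1/2)) = complex_of_real (exp ((1-2*x) * ln 2) * sqrt pi * Gamma (2*x))"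
    using Gamma_legendre_duplication[OF nz]
    by (simp add: Gamma_complex_of_real[symmetric] exp_of_real[symmetric])
  thus ?thesis by (simp only: of_real_eq_iff)
qed

lemma Fform:
  fixes x :: real assumes "x > 0"
  shows "2 powr (-2*x) * Gamma (2*x) = Gamma x * Gamma (x+1/2) / (2 * sqrt pi)"
proof -
  have e: "(1-2*x) * ln 2 = ln 2 + (-2*x) * ln 2" by algebra
  have "exp ((1-2*x) * ln 2) = 2 * 2 powr (-2*x)"
    unfolding e exp_add by (simp add: powr_def)
  thus ?thesis using Gamma_dup_real[OF assms] by (simp add: field_simps)
qed

definition F :: "real \<Rightarrow> real \<Rightarrow> real \<Rightarrow> real" where
  "F p q t = 2 powr (- 2 * t) * Gamma (2 * t) / (Gamma (t + p) * Gamma (t + q))"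

lemma F_alt:
  assumes "t > 0" "p \<ge> 1/2" "q \<ge> 0"
  shows "F p q t = (Gamma t / Gamma (t+q)) * (Gamma (t+1/2) / Gamma ((t+1/2) + (p-1/2))) / (2 * sqrt pi)"
proof -
  have e: "(t+1/2)+(p-1/2) = t + p" by simp
  have pos: "Gamma (t+p) > 0" "Gamma (t+q) > 0" "sqrt pi > 0" using assms by auto
  show ?thesis unfolding e F_def Fform[OF assms(1)] using pos by (simp add: field_simps)
qed

lemma F_pos: assumes "t > 0" "p \<ge> 1/2" "q \<ge> 0" shows "F p q t > 0"
  using assms unfolding F_alt[OF assms] by (auto intro!: divide_pos_pos mult_pos_pos)

lemma F_mono: assumes "0 < x" "x \<le> y" "p \<ge> 1/2" "q \<ge> 0" shows "F p q y \<le> F p q x"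
proof -
  have y: "y > 0" using assms by linarith
  have 1: "Gamma y / Gamma (y+q) \<le> Gamma x / Gamma (x+q)"
    by (rule Gamma_ratio_antimono) (use assms in auto)
  have 2: "Gamma (y+1/2) / Gamma ((y+1/2) + (p-1/2)) \<le> Gamma (x+1/2) / Gamma ((x+1/2) + (p-1/2))"
    by (rule Gamma_ratio_antimono) (use assms in auto)
  have "(Gamma y / Gamma (y+q)) * (Gamma (y+1/2) / Gamma ((y+1/2) + (p-1/2)))
      \<le> (Gamma x / Gamma (x+q)) * (Gamma (x+1/2) / Gamma ((x+1/2) + (p-1/2)))"
    by (rule mult_mono[OF 1 2]) (use assms y in auto)
  hence "(Gamma y / Gamma (y+q)) * (Gamma (y+1/2) / Gamma ((y+1/2) + (p-1/2))) / (2 * sqrt pi)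
      \<le> (Gamma x / Gamma (x+q)) * (Gamma (x+1/2) / Gamma ((x+1/2) + (p-1/2))) / (2 * sqrt pi)"
    by (rule divide_right_mono) simp
  thus ?thesis unfolding F_alt[OF assms(1,3,4)] F_alt[OF y assms(3,4)] .
qed


lemma coroot_add: "coroot_coeff (x + y) a = coroot_coeff x a + coroot_coeff y a"
  by (simp add: coroot_coeff_def inner_add_left add_divide_distrib)

lemma refl_self: "a \<noteq> 0 \<Longrightarrow> root_reflect a a = - a"
  by (simp add: root_reflect_def coroot_coeff_def algebra_simps scaleR_2)

lemma refl_inner: "inner a a \<noteq> 0 \<Longrightarrow> inner (root_reflect a b) a = - inner b a"
  by (simp add: root_reflect_def coroot_coeff_def inner_diff_left algebra_simps)

lemma refl_invol: "inner a a \<noteq> 0 \<Longrightarrow> root_reflect a (root_reflect a b) = b"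
proof -
  assume n: "inner a a \<noteq> 0"
  have "root_reflect a (root_reflect a b) = root_reflect a b + (2 * coroot_coeff b a) *\<^sub>R a"
    using refl_inner[OF n, of b] n by (simp add: root_reflect_def coroot_coeff_def algebra_simps)
  thus ?thesis by (simp add: root_reflect_def)
qed

lemma half_not_Int: "(1/2::real) \<notin> \<int>"
proof
  assume "(1/2::real) \<in> \<int>"
  then obtain k where "(1/2::real) = of_int k" by (auto elim: Ints_cases)
  hence "(1::real) = of_int (2*k)" by simp
  hence "1 = 2*k" by linarith
  thus False by presburger
qed

lemma int_cases_aux:
  fixes c :: real assumes "c > 0" "2*c \<in> \<int>" "2/c \<in> \<int>"
  shows "c = 1/2 \<or> c = 1 \<or> c = 2"
proof -
  obtain p where p: "2*c = of_int p" using assms(2) by (auto elim: Ints_cases)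
  obtain q where q: "2/c = of_int q" using assms(3) by (auto elim: Ints_cases)
  have "of_int (p*q) = (2*c)*(2/c)" using p q by simp
  also have "\<dots> = (4::real)" using assms(1) by simp
  finally have pq: "p*q = 4" by linarith
  have "p > 0" using p assms(1) by (metis of_int_0_less_iff zero_less_mult_iff zero_less_numeral)
  moreover have "q > 0" using q assms(1) by (metis of_int_0_less_iff divide_pos_pos zero_less_numeral)
  ultimately have "p \<le> 4" using pq by (metis int_one_le_iff_zero_less mult.right_neutral mult_left_mono order_less_imp_le)
  hence "p = 1 \<or> p = 2 \<or> p = 3 \<or> p = 4" using \<open>p > 0\<close> by presburger
  moreover have "p \<noteq> 3"
  proof
    assume "p = 3"
    with pq have "3*q = 4" by simp
    thus False by presburger
  qed
  ultimately have "p = 1 \<or> p = 2 \<or> p = 4" by blast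
  thus ?thesis using p by auto
qed

locale rsys =
  fixes S :: "'a::euclidean_space set" and m :: "'a \<Rightarrow> nat" and P :: "'a set"
    and h :: 'a and alpha xi :: "nat \<Rightarrow> 'a" and r :: nat
  assumes fin: "finite S" and zero: "0 \<notin> S"
    and refl: "\<And>a b. a \<in> S \<Longrightarrow> b \<in> S \<Longrightarrow> root_reflect a b \<in> S"
    and integ: "\<And>a b. a \<in> S \<Longrightarrow> b \<in> S \<Longrightarrow> 2 * coroot_coeff b a \<in> \<int>"
    and mpos: "\<And>a. a \<in> S \<Longrightarrow> m a > 0"
    and mrefl: "\<And>a b. a \<in> S \<Longrightarrow> b \<in> S \<Longrightarrow> m (root_reflect a b) = m b"
    and hne: "\<And>a. a \<in> S \<Longrightarrow> inner a h \<noteq> 0"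
    and Pdef: "P = {a\<in>S. inner a h > 0}"
    and bij: "bij_betw alpha {1..r} (simple_roots0 S P)"
    and dual: "\<And>i j. i \<in> {1..r} \<Longrightarrow> j \<in> {1..r} \<Longrightarrow>
           coroot_coeff (xi i) (alpha j) = (if i = j then 1 else 0)"
begin

abbreviation "I \<equiv> {1..r}"
abbreviation "S0 \<equiv> Sigma0_pos S P"

lemma S0_sub: "S0 \<subseteq> P" "P \<subseteq> S" by (auto simp: Sigma0_pos_def Pdef)

lemma finP: "finite P" by (rule finite_subset[OF S0_sub(2) fin])
lemma finS0': "finite S0" by (rule finite_subset[OF S0_sub(1) finP])
lemmas finS0 = finS0' finP

lemma alpha_img: "alpha ` I = simple_roots0 S P" by (rule bij_betw_imp_surj_on[OF bij])

lemma alpha_simple: "j \<in> I \<Longrightarrow> alpha j \<in> simple_roots0 S P"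
  unfolding alpha_img[symmetric] by simp

lemma alpha_S0: "j \<in> I \<Longrightarrow> alpha j \<in> S0"
  using alpha_simple unfolding simple_roots0_def by blast

lemma alpha_P: "j \<in> I \<Longrightarrow> alpha j \<in> P" using alpha_S0 S0_sub by auto
lemma alpha_S: "j \<in> I \<Longrightarrow> alpha j \<in> S" using alpha_P S0_sub by auto
lemma P_h: "a \<in> P \<Longrightarrow> inner a h > 0" by (auto simp: Pdef)

lemma S_nn: "a \<in> S \<Longrightarrow> inner a a > 0" using zero by auto
lemma alpha_nn: "j \<in> I \<Longrightarrow> inner (alpha j) (alpha j) > 0" using S_nn alpha_S by auto

lemma xi_alpha: "i \<in> I \<Longrightarrow> j \<in> I \<Longrightarrow>
   inner (xi i) (alpha j) = (if i = j then inner (alpha j) (alpha j) else 0)"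
proof (cases "i = j")
  case True
  assume ij: "i \<in> I" "j \<in> I"
  show ?thesis using dual[OF ij] alpha_nn[OF ij(2)] True by (simp add: coroot_coeff_def)
next
  case False
  assume ij: "i \<in> I" "j \<in> I"
  show ?thesis using dual[OF ij] alpha_nn[OF ij(2)] False by (simp add: coroot_coeff_def)
qed

lemma xi_sum: "i \<in> I \<Longrightarrow> inner (xi i) (\<Sum>j\<in>I. c j *\<^sub>R alpha j) = c i * inner (alpha i) (alpha i)"
proof -
  assume i: "i \<in> I"
  have "inner (xi i) (\<Sum>j\<in>I. c j *\<^sub>R alpha j) = (\<Sum>j\<in>I. c j * inner (xi i) (alpha j))"
    by (simp add: inner_sum_right)
  also have "\<dots> = (\<Sum>j\<in>I. if j = i then c i * inner (alpha i) (alpha i) else 0)"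
    by (rule sum.cong) (use i xi_alpha in auto)
  also have "\<dots> = c i * inner (alpha i) (alpha i)" using i by simp
  finally show ?thesis .
qed

lemma S0_decomp:
  assumes "a \<in> S0" shows "\<exists>n::nat\<Rightarrow>nat. a = (\<Sum>j\<in>I. real (n j) *\<^sub>R alpha j)"
  using assms
proof (induction "card {b\<in>S0. inner b h < inner a h}" arbitrary: a rule: less_induct)
  case (less a)
  show ?case
  proof (cases "a \<in> simple_roots0 S P")
    case True
    hence "a \<in> alpha ` I" using bij_betw_imp_surj_on[OF bij] by simp
    then obtain j where j: "j \<in> I" "a = alpha j" by (rule imageE) simp
    have "(\<Sum>i\<in>I. real (if i = j then 1 else 0) *\<^sub>R alpha i) = (\<Sum>i\<in>I. if i = j then alpha i else 0)"
      by (rule sum.cong) auto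
    also have "\<dots> = a" using j by simp
    finally have "a = (\<Sum>i\<in>I. real (if i = j then 1 else 0) *\<^sub>R alpha i)" by simp
    thus ?thesis by (rule exI[of _ "\<lambda>i. if i = j then 1 else 0"])
  next
    case False
    then obtain b c where bc: "b \<in> S0" "c \<in> S0" "a = b + c" using less.prems
      unfolding simple_roots0_def by auto
    have hb: "inner b h > 0" "inner c h > 0" using bc S0_sub P_h by auto
    have fa: "finite {x\<in>S0. inner x h < inner a h}"
      by (rule finite_subset[OF _ finS0(1)]) blast
    have s1: "{x\<in>S0. inner x h < inner b h} \<subset> {x\<in>S0. inner x h < inner a h}"
    proof
      show "{x\<in>S0. inner x h < inner b h} \<subseteq> {x\<in>S0. inner x h < inner a h}"
        using bc hb by (auto simp: inner_add_left)
      have "b \<in> {x\<in>S0. inner x h < inner a h}" using bc hb by (simp add: inner_add_left)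
      moreover have "b \<notin> {x\<in>S0. inner x h < inner b h}" by simp
      ultimately show "{x\<in>S0. inner x h < inner b h} \<noteq> {x\<in>S0. inner x h < inner a h}"
        by blast
    qed
    have s2: "{x\<in>S0. inner x h < inner c h} \<subset> {x\<in>S0. inner x h < inner a h}"
    proof
      show "{x\<in>S0. inner x h < inner c h} \<subseteq> {x\<in>S0. inner x h < inner a h}"
        using bc hb by (auto simp: inner_add_left)
      have "c \<in> {x\<in>S0. inner x h < inner a h}" using bc hb by (simp add: inner_add_left)
      moreover have "c \<notin> {x\<in>S0. inner x h < inner c h}" by simp
      ultimately show "{x\<in>S0. inner x h < inner c h} \<noteq> {x\<in>S0. inner x h < inner a h}"
        by blast
    qed
    obtain nb where nb: "b = (\<Sum>j\<in>I. real (nb j) *\<^sub>R alpha j)"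
      using less.hyps[OF psubset_card_mono[OF fa s1] bc(1)] by blast
    obtain nc where nc: "c = (\<Sum>j\<in>I. real (nc j) *\<^sub>R alpha j)"
      using less.hyps[OF psubset_card_mono[OF fa s2] bc(2)] by blast
    have "a = (\<Sum>j\<in>I. real (nb j + nc j) *\<^sub>R alpha j)"
      using bc nb nc by (simp add: scaleR_add_left sum.distrib)
    thus ?thesis by (rule exI[of _ "\<lambda>j. nb j + nc j"])
  qed
qed

lemma S_neg: assumes "a \<in> S" shows "- a \<in> S"
proof -
  have "a \<noteq> 0" using zero assms by auto
  thus ?thesis using refl[OF assms assms] refl_self by metis
qed

lemma no_4: assumes "a \<in> S" shows "(2::real) *\<^sub>R ((2::real) *\<^sub>R a) \<notin> S"
proof
  assume b: "(2::real) *\<^sub>R ((2::real) *\<^sub>R a) \<in> S"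
  have e: "2 * coroot_coeff a ((2::real) *\<^sub>R ((2::real) *\<^sub>R a)) = 1/2"
    using S_nn[OF assms] by (simp add: coroot_coeff_def field_simps)
  show False using integ[OF b assms] half_not_Int unfolding e by blast
qed

lemma P_decomp:
  assumes "a \<in> P" shows "\<exists>c. (\<forall>j. c j \<ge> 0) \<and> a = (\<Sum>j\<in>I. c j *\<^sub>R alpha j)"
proof (cases "a \<in> S0")
  case True
  then obtain n where "a = (\<Sum>j\<in>I. real (n j) *\<^sub>R alpha j)" using S0_decomp by blast
  thus ?thesis by (intro exI[of _ "\<lambda>j. real (n j)"]) auto
next
  case False
  hence a2: "(2::real) *\<^sub>R a \<in> S" using assms by (auto simp: Sigma0_pos_def)
  have "(2::real) *\<^sub>R a \<in> S0"
    using a2 no_4[of a] assms P_h[OF assms] S0_sub by (auto simp: Sigma0_pos_def Pdef)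
  then obtain n where n: "(2::real) *\<^sub>R a = (\<Sum>j\<in>I. real (n j) *\<^sub>R alpha j)" using S0_decomp by blast
  have "a = (1/2::real) *\<^sub>R ((2::real) *\<^sub>R a)" by simp
  also have "\<dots> = (\<Sum>j\<in>I. (real (n j) / 2) *\<^sub>R alpha j)"
    unfolding n scaleR_sum_right by simp
  finally show ?thesis by (intro exI[of _ "\<lambda>j. real (n j) / 2"]) auto
qed

lemma mult_cases:
  assumes a: "a \<in> S" and b: "c *\<^sub>R a \<in> S" and c: "c > 0"
  shows "c = 1/2 \<or> c = 1 \<or> c = 2"
proof (rule int_cases_aux[OF c])
  have n: "inner a a > 0" using S_nn[OF a] .
  have "2 * coroot_coeff (c *\<^sub>R a) a = 2 * c" using n by (simp add: coroot_coeff_def)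
  thus "2 * c \<in> \<int>" using integ[OF a b] by simp
  have "2 * coroot_coeff a (c *\<^sub>R a) = 2 / c" using n c by (simp add: coroot_coeff_def field_simps power2_eq_square)
  thus "2 / c \<in> \<int>" using integ[OF b a] by simp
qed

lemma refl_pos:
  assumes i: "i \<in> I" and b: "\<beta> \<in> P" and n1: "\<beta> \<noteq> alpha i"
    and n2: "\<beta> \<noteq> (1/2::real) *\<^sub>R alpha i"
  shows "root_reflect (alpha i) \<beta> \<in> P"
proof (rule ccontr)
  assume nP: "root_reflect (alpha i) \<beta> \<notin> P"
  define t where "t = 2 * coroot_coeff \<beta> (alpha i)"
  have bS: "\<beta> \<in> S" using b S0_sub by auto
  have aS: "alpha i \<in> S" using alpha_S[OF i] .
  have rS: "root_reflect (alpha i) \<beta> \<in> S" using refl[OF aS bS] .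
  have "inner (root_reflect (alpha i) \<beta>) h \<noteq> 0" using hne[OF rS] .
  moreover have "\<not> inner (root_reflect (alpha i) \<beta>) h > 0" using nP rS by (simp add: Pdef)
  ultimately have "inner (root_reflect (alpha i) \<beta>) h < 0" by linarith
  hence nr: "- root_reflect (alpha i) \<beta> \<in> P" using S_neg[OF rS] by (simp add: Pdef)
  obtain c where c: "\<forall>j. c j \<ge> 0" "\<beta> = (\<Sum>j\<in>I. c j *\<^sub>R alpha j)" using P_decomp[OF b] by blast
  obtain d where d: "\<forall>j. d j \<ge> 0" "- root_reflect (alpha i) \<beta> = (\<Sum>j\<in>I. d j *\<^sub>R alpha j)"
    using P_decomp[OF nr] by blast
  have "(\<Sum>j\<in>I. (c j + d j) *\<^sub>R alpha j) = (\<Sum>j\<in>I. c j *\<^sub>R alpha j) + (\<Sum>j\<in>I. d j *\<^sub>R alpha j)"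
    by (simp add: scaleR_add_left sum.distrib)
  also have "\<dots> = \<beta> + - root_reflect (alpha i) \<beta>" using c d by simp
  also have "\<dots> = t *\<^sub>R alpha i" by (simp add: root_reflect_def t_def)
  finally have eq: "(\<Sum>j\<in>I. (c j + d j) *\<^sub>R alpha j) = t *\<^sub>R alpha i" .
  have zj: "c j = 0" if j: "j \<in> I" "j \<noteq> i" for j
  proof -
    have "(c j + d j) * inner (alpha j) (alpha j) = inner (xi j) (t *\<^sub>R alpha i)"
      using xi_sum[OF j(1), of "\<lambda>j. c j + d j"] eq by simp
    also have "\<dots> = 0" using xi_alpha[OF j(1) i] j(2) by simp
    finally have "c j + d j = 0" using alpha_nn[OF j(1)] by simp
    thus ?thesis using c(1) d(1) by (metis add_nonneg_eq_0_iff)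
  qed
  have "\<beta> = (\<Sum>j\<in>I. if j = i then c i *\<^sub>R alpha i else 0)"
    unfolding c(2) by (rule sum.cong) (use zj in auto)
  also have "\<dots> = c i *\<^sub>R alpha i" using i by simp
  finally have bc: "\<beta> = c i *\<^sub>R alpha i" .
  have "inner \<beta> h = c i * inner (alpha i) h" using bc by simp
  hence "c i \<noteq> 0" using P_h[OF b] by auto
  hence cpos: "c i > 0" using c(1) by (metis less_eq_real_def)
  have "c i = 1/2 \<or> c i = 1 \<or> c i = 2" using mult_cases[OF aS _ cpos] bc bS by simp
  moreover have "(2::real) *\<^sub>R alpha i \<notin> S" using alpha_S0[OF i] by (simp add: Sigma0_pos_def)
  ultimately show False using bc n1 n2 bS by auto
qed

lemma refl_half: "root_reflect a ((1/2::real) *\<^sub>R a) = - ((1/2::real) *\<^sub>R a)"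
proof -
  have e: "(1/2::real) *\<^sub>R a + (1/2::real) *\<^sub>R a = a" by (simp add: scaleR_add_left[symmetric])
  show ?thesis using e by (cases "a = 0") (simp_all add: root_reflect_def coroot_coeff_def algebra_simps)
qed

lemma rho_simple_pos:
  assumes i: "i \<in> I" shows "inner (rho_vec m P) (alpha i) > 0"
proof -
  define a where "a = alpha i"
  define \<sigma> where "\<sigma> = root_reflect a"
  define g where "g b = real (m b) * inner b a" for b
  define P' where "P' = P - {a, (1/2::real) *\<^sub>R a}"
  have aS: "a \<in> S" and aP: "a \<in> P" and ann: "inner a a > 0"
    using alpha_S[OF i] alpha_P[OF i] alpha_nn[OF i] by (auto simp: a_def)
  have na: "- a \<notin> P" using P_h[OF aP] by (auto simp: Pdef)
  have nha: "- ((1/2::real) *\<^sub>R a) \<notin> P" using P_h[OF aP] by (auto simp: Pdef)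
  have inv: "\<sigma> (\<sigma> x) = x" for x using refl_invol[of a x] ann by (simp add: \<sigma>_def)
  have map: "\<sigma> x \<in> P'" if x: "x \<in> P'" for x
  proof -
    have xP: "x \<in> P" "x \<noteq> a" "x \<noteq> (1/2::real) *\<^sub>R a" using x by (auto simp: P'_def)
    have "\<sigma> x \<in> P" using refl_pos[OF i xP[unfolded a_def]] by (simp add: \<sigma>_def a_def)
    moreover have "\<sigma> x \<noteq> a"
    proof
      assume "\<sigma> x = a"
      hence "x = \<sigma> a" using inv by metis
      also have "\<dots> = - a" using refl_self[of a] aS zero by (auto simp: \<sigma>_def)
      finally show False using na xP by simp
    qed
    moreover have "\<sigma> x \<noteq> (1/2::real) *\<^sub>R a"
    proof
      assume "\<sigma> x = (1/2::real) *\<^sub>R a"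
      hence "x = \<sigma> ((1/2::real) *\<^sub>R a)" using inv by metis
      also have "\<dots> = - ((1/2::real) *\<^sub>R a)" by (simp add: \<sigma>_def refl_half)
      finally show False using nha xP by simp
    qed
    ultimately show ?thesis by (simp add: P'_def)
  qed
  have bij': "bij_betw \<sigma> P' P'"
    by (rule bij_betw_byWitness[where f'=\<sigma>]) (use inv map in auto)
  have gs: "g (\<sigma> x) = - g x" if "x \<in> P'" for x
  proof -
    have xS: "x \<in> S" using that S0_sub by (auto simp: P'_def)
    show ?thesis using mrefl[OF aS xS] refl_inner[of a x] ann
      by (simp add: g_def \<sigma>_def inner_commute)
  qed
  have "sum g P' = (\<Sum>x\<in>P'. g (\<sigma> x))" using sum.reindex_bij_betw[OF bij', of g] by simp
  also have "\<dots> = - sum g P'" using gs by (simp add: sum_negf)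
  finally have z: "sum g P' = 0" by simp
  have finQ: "finite (P \<inter> {a, (1/2::real) *\<^sub>R a})" using finS0 by simp
  have "g a \<le> sum g (P \<inter> {a, (1/2::real) *\<^sub>R a})"
  proof (rule member_le_sum)
    show "a \<in> P \<inter> {a, (1/2::real) *\<^sub>R a}" using aP by simp
    show "finite (P \<inter> {a, (1/2::real) *\<^sub>R a})" using finQ .
    fix x assume "x \<in> P \<inter> {a, (1/2::real) *\<^sub>R a} - {a}"
    thus "0 \<le> g x" using ann by (auto simp: g_def)
  qed
  moreover have "g a > 0" using mpos[OF aS] ann by (simp add: g_def)
  ultimately have q: "sum g (P \<inter> {a, (1/2::real) *\<^sub>R a}) > 0" by linarith
  have "sum g P = sum g (P \<inter> {a, (1/2::real) *\<^sub>R a}) + sum g P'"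
    unfolding P'_def by (rule sum.Int_Diff[OF finS0(2)])
  hence "sum g P > 0" using q z by simp
  moreover have "inner (rho_vec m P) a = (1/2) * sum g P"
    by (simp add: rho_vec_def g_def inner_sum_left)
  ultimately show ?thesis by (simp add: a_def)
qed

lemma rho_pos:
  assumes a: "a \<in> S0" shows "inner (rho_vec m P) a > 0"
proof -
  obtain n where n: "a = (\<Sum>j\<in>I. real (n j) *\<^sub>R alpha j)" using S0_decomp[OF a] by blast
  have "a \<noteq> 0" using a S0_sub zero by auto
  then obtain j where j: "j \<in> I" "n j \<noteq> 0" using n by (metis (no_types, lifting) of_nat_0 scaleR_zero_left sum.neutral)
  have "inner (rho_vec m P) a = (\<Sum>j\<in>I. real (n j) * inner (rho_vec m P) (alpha j))"
    unfolding n by (simp add: inner_sum_right)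
  also have "\<dots> \<ge> real (n j) * inner (rho_vec m P) (alpha j)"
  proof (rule member_le_sum)
    fix x assume "x \<in> I - {j}"
    hence "inner (rho_vec m P) (alpha x) > 0" using rho_simple_pos by auto
    thus "0 \<le> real (n x) * inner (rho_vec m P) (alpha x)" by simp
  qed (use j in auto)
  finally show ?thesis using j rho_simple_pos[OF j(1)] by (smt (verit) mult_pos_pos of_nat_0_less_iff neq0_conv)
qed


lemma coeff_ineq:
  assumes a: "a \<in> S0" and s: "1 \<le> s" "s \<le> r" and ks: "k s > 0"
  shows "coroot_coeff (xi s) a \<ge> 0"
    "coroot_coeff (xi s) a \<le> coroot_coeff (\<Sum>j=1..s. real (k j) *\<^sub>R xi j) a"
proof -
  obtain n where n: "a = (\<Sum>j\<in>I. real (n j) *\<^sub>R alpha j)" using S0_decomp[OF a] by blast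
  have sI: "s \<in> I" using s by auto
  have aa: "inner a a > 0" using a S0_sub S_nn by auto
  have x: "inner (xi s) a = real (n s) * inner (alpha s) (alpha s)"
    unfolding n by (rule xi_sum[OF sI])
  have mu_j: "inner (\<Sum>i=1..s. real (k i) *\<^sub>R xi i) (alpha j)
      = (if j \<le> s then real (k j) * inner (alpha j) (alpha j) else 0)" if j: "j \<in> I" for j
  proof -
    have "inner (\<Sum>i=1..s. real (k i) *\<^sub>R xi i) (alpha j) = (\<Sum>i=1..s. real (k i) * inner (xi i) (alpha j))"
      by (simp add: inner_sum_left)
    also have "\<dots> = (\<Sum>i=1..s. if i = j then real (k j) * inner (alpha j) (alpha j) else 0)"
      by (rule sum.cong) (use j s xi_alpha in auto)
    also have "\<dots> = (if j \<le> s then real (k j) * inner (alpha j) (alpha j) else 0)"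
      using j by auto
    finally show ?thesis .
  qed
  have "inner (\<Sum>i=1..s. real (k i) *\<^sub>R xi i) a
      = (\<Sum>j\<in>I. real (n j) * (if j \<le> s then real (k j) * inner (alpha j) (alpha j) else 0))"
    unfolding n inner_sum_right inner_scaleR_right
  proof (rule sum.cong[OF HOL.refl])
    fix j assume j: "j \<in> I"
    show "real (n j) * inner (\<Sum>i=1..s. real (k i) *\<^sub>R xi i) (alpha j)
      = real (n j) * (if j \<le> s then real (k j) * inner (alpha j) (alpha j) else 0)"
      by (simp only: mu_j[OF j])
  qed
  also have "\<dots> \<ge> real (n s) * (if s \<le> s then real (k s) * inner (alpha s) (alpha s) else 0)"
  proof (rule member_le_sum)
    fix j assume "j \<in> I - {s}"
    thus "0 \<le> real (n j) * (if j \<le> s then real (k j) * inner (alpha j) (alpha j) else 0)"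
      using alpha_nn[of j] by (auto intro!: mult_nonneg_nonneg)
  qed (use sI in auto)
  finally have "inner (\<Sum>i=1..s. real (k i) *\<^sub>R xi i) a \<ge> real (n s) * (real (k s) * inner (alpha s) (alpha s))"
    by simp
  moreover have "real (n s) * inner (alpha s) (alpha s) \<le> real (n s) * (real (k s) * inner (alpha s) (alpha s))"
    using ks alpha_nn[OF sI] by (auto intro!: mult_left_mono)
  ultimately have "inner (xi s) a \<le> inner (\<Sum>i=1..s. real (k i) *\<^sub>R xi i) a" using x by linarith
  thus "coroot_coeff (xi s) a \<le> coroot_coeff (\<Sum>j=1..s. real (k j) *\<^sub>R xi j) a"
    using aa by (simp add: coroot_coeff_def divide_right_mono)
  show "coroot_coeff (xi s) a \<ge> 0" using x aa alpha_nn[OF sI] by (simp add: coroot_coeff_def)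
qed

lemma rho_coeff_pos: "a \<in> S0 \<Longrightarrow> coroot_coeff (rho_vec m P) a > 0"
  using rho_pos[of a] S0_sub S_nn[of a] by (auto simp: coroot_coeff_def)

end

lemma c_prime_F:
  "c_prime S m P lam = (\<Prod>a\<in>Sigma0_pos S P.
     F (real (m ((1/2::real) *\<^sub>R a)) / 4 + 1/2) (real (m ((1/2::real) *\<^sub>R a)) / 4 + real (m a) / 2)
       (coroot_coeff lam a))"
  unfolding c_prime_def F_def Let_def by (rule prod.cong) (simp_all add: add.assoc)

theorem lemma6p1:
  fixes S :: "'a::euclidean_space set" and m :: "'a \<Rightarrow> nat" and P :: "'a set"
    and alpha xi :: "nat \<Rightarrow> 'a" and k :: "nat \<Rightarrow> nat" and s :: nat
  assumes "root_system_mult S m"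
    and "positive_system S P"
    and "bij_betw alpha {1..DIM('a)} (simple_roots0 S P)"
    and "\<forall>i\<in>{1..DIM('a)}. \<forall>j\<in>{1..DIM('a)}.
           coroot_coeff (xi i) (alpha j) = (if i = j then 1 else 0)"
    and "1 \<le> s" and "s \<le> DIM('a)" and "k s > 0"
  shows "c_fun S m P ((\<Sum>j=1..s. real (k j) *\<^sub>R xi j) + rho_vec m P)
         \<le> c_fun S m P (xi s + rho_vec m P)"
proof -
  obtain h where h: "\<forall>a\<in>S. inner a h \<noteq> 0" "P = {a\<in>S. inner a h > 0}"
    using assms(2) unfolding positive_system_def by blast
  interpret rsys S m P h alpha xi "DIM('a)"
    using assms(1,3,4) h unfolding root_system_mult_def by unfold_locales auto
  define mu where "mu = (\<Sum>j=1..s. real (k j) *\<^sub>R xi j)"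
  define rho where "rho = rho_vec m P"
  define p where "p a = real (m ((1/2::real) *\<^sub>R a)) / 4 + 1/2" for a
  define q where "q a = real (m ((1/2::real) *\<^sub>R a)) / 4 + real (m a) / 2" for a
  have pq: "p a \<ge> 1/2" "q a \<ge> 0" for a by (auto simp: p_def q_def)
  have cp: "c_prime S m P lam = (\<Prod>a\<in>S0. F (p a) (q a) (coroot_coeff lam a))" for lam
    unfolding c_prime_F p_def q_def ..
  have le: "c_prime S m P (mu + rho) \<le> c_prime S m P (xi s + rho)"
    unfolding cp
  proof (rule prod_mono)
    fix a assume a: "a \<in> S0"
    have r0: "coroot_coeff rho a > 0" using rho_coeff_pos[OF a] by (simp add: rho_def)
    have ci: "coroot_coeff (xi s) a \<ge> 0" "coroot_coeff (xi s) a \<le> coroot_coeff mu a"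
      using coeff_ineq[where k=k, OF a assms(5,6,7)] by (simp_all add: mu_def)
    have x2: "coroot_coeff (xi s + rho) a > 0" using r0 ci by (simp add: coroot_add)
    have x12: "coroot_coeff (xi s + rho) a \<le> coroot_coeff (mu + rho) a" using ci by (simp add: coroot_add)
    have x1: "coroot_coeff (mu + rho) a > 0" using x2 x12 by linarith
    show "0 \<le> F (p a) (q a) (coroot_coeff (mu + rho) a) \<and>
          F (p a) (q a) (coroot_coeff (mu + rho) a) \<le> F (p a) (q a) (coroot_coeff (xi s + rho) a)"
      using F_pos[OF x1 pq(1)[of a] pq(2)[of a]] F_mono[OF x2 x12 pq(1)[of a] pq(2)[of a]] by simp
  qed
  have pos: "c_prime S m P rho > 0"
    unfolding cp by (rule prod_pos) (use F_pos rho_coeff_pos pq in \<open>auto simp: rho_def\<close>)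
  show ?thesis using le pos unfolding c_fun_def mu_def rho_def
    by (simp add: divide_right_mono)
qed

end
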